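(* Let $(\Omega,\mathcal{F})$ be a measurable space and $\mathcal{P}=\{P_1,\dots,P_K\}$ a finite set of probability measures on it, with $\hat{\mathbb{E}}[Z]=\max_{1\le i\le K}E_{P_i}[Z]$. Let $X,Y$ be random variables with $\hat{\mathbb{E}}[X^2]+\hat{\mathbb{E}}[Y^2]<\infty$, and set $a_i=E_{P_i}[X]$, $b_i=E_{P_i}[Y]$, $c_i=C_{P_i}(X,Y)$ for $1\le i\le K$. For $1\le i\le j\le K$ define $$q_{ij}(x)=\begin{cases}\dfrac{1}{b_j-b_i}\Big((x-b_i)(x-b_j)(a_i-a_j)+(x-b_i)(c_j-c_i)\Big)+c_i, & a_i\ne a_j\text{ and }b_i\ne b_j,\\ c_i, & \text{otherwise},\end{cases}$$ and $$\tilde{\mu}_{ij}=\begin{cases}\left(\left(\dfrac{c_j-c_i}{2(a_j-a_i)}+\dfrac{b_i+b_j}{2}\right)\vee\underline{b}_{ij}\right)\wedge\overline{b}_{ij}, & a_i\ne a_j\text{ and }b_i\ne b_j,\\ b_i, & \text{otherwise},\end{cases}$$ where $\underline{b}_{ij}=b_i\wedge b_j$ and $\overline{b}_{ij}=b_i\vee b_j$. Then $$\overline{C}(X,Y)=\max\Big\{\max_{1\le i\le K}C_{P_i}(X,Y),\ \max_{1\le i\le j\le K}q_{ij}(\tilde{\mu}_{ij})\Big\}.$$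
   Context: For a random variable $W$ with $\hat{\mathbb{E}}[W^2]<\infty$: $\overline{\mu}_W=\hat{\mathbb{E}}[W]$, $\underline{\mu}_W=-\hat{\mathbb{E}}[-W]$, $M_W=[\underline{\mu}_W,\overline{\mu}_W]$. Upper covariance $\overline{C}(X,Y)=\max_{\mu_2\in M_Y}\min_{\mu_1\in M_X}\hat{\mathbb{E}}[(X-\mu_1)(Y-\mu_2)]$. For a probability measure $P$, $C_P(X,Y)=E_P[(X-E_P[X])(Y-E_P[Y])]$. $\vee$ and $\wedge$ denote max and min. *)

theory Defs
  imports "HOL-Probability.Probability"
begin

definition sub_E :: "(nat \<Rightarrow> 'a measure) \<Rightarrow> nat \<Rightarrow> ('a \<Rightarrow> real) \<Rightarrow> real" where
  "sub_E P K Z = Max ((\<lambda>i. LINT \<omega>|P i. Z \<omega>) ` {1..K})"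

definition upper_mean :: "(nat \<Rightarrow> 'a measure) \<Rightarrow> nat \<Rightarrow> ('a \<Rightarrow> real) \<Rightarrow> real" where
  "upper_mean P K W = sub_E P K W"

definition lower_mean :: "(nat \<Rightarrow> 'a measure) \<Rightarrow> nat \<Rightarrow> ('a \<Rightarrow> real) \<Rightarrow> real" where
  "lower_mean P K W = - sub_E P K (\<lambda>\<omega>. - W \<omega>)"

text \<open>Upper covariance: max over mu2 in M_Y of min over mu1 in M_X
  (max/min over compact intervals of continuous functions, written as SUP/INF).\<close>
definition upper_cov :: "(nat \<Rightarrow> 'a measure) \<Rightarrow> nat \<Rightarrow> ('a \<Rightarrow> real) \<Rightarrow> ('a \<Rightarrow> real) \<Rightarrow> real" where
  "upper_cov P K X Y =
     (SUP \<mu>2 \<in> {lower_mean P K Y..upper_mean P K Y}.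
        INF \<mu>1 \<in> {lower_mean P K X..upper_mean P K X}.
          sub_E P K (\<lambda>\<omega>. (X \<omega> - \<mu>1) * (Y \<omega> - \<mu>2)))"

definition cov_P :: "'a measure \<Rightarrow> ('a \<Rightarrow> real) \<Rightarrow> ('a \<Rightarrow> real) \<Rightarrow> real" where
  "cov_P Q X Y = (LINT \<omega>|Q. (X \<omega> - (LINT \<omega>|Q. X \<omega>)) * (Y \<omega> - (LINT \<omega>|Q. Y \<omega>)))"

definition q_fun :: "real \<Rightarrow> real \<Rightarrow> real \<Rightarrow> real \<Rightarrow> real \<Rightarrow> real \<Rightarrow> real \<Rightarrow> real" where
  "q_fun ai aj bi bj ci cj x =
     (if ai \<noteq> aj \<and> bi \<noteq> bj
      then (1 / (bj - bi)) * ((x - bi) * (x - bj) * (ai - aj) + (x - bi) * (cj - ci)) + ci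
      else ci)"

definition mu_tilde :: "real \<Rightarrow> real \<Rightarrow> real \<Rightarrow> real \<Rightarrow> real \<Rightarrow> real \<Rightarrow> real" where
  "mu_tilde ai aj bi bj ci cj =
     (if ai \<noteq> aj \<and> bi \<noteq> bj
      then min (max ((cj - ci) / (2 * (aj - ai)) + (bi + bj) / 2) (min bi bj)) (max bi bj)
      else bi)"

end

theory Submission
  imports Defs
begin


definition Qg :: "real \<Rightarrow> real \<Rightarrow> real \<Rightarrow> real \<Rightarrow> real \<Rightarrow> real \<Rightarrow> real \<Rightarrow> real" where
  "Qg ai aj bi bj ci cj x = (1 / (bj - bi)) * ((x - bi) * (x - bj) * (ai - aj) + (x - bi) * (cj - ci)) + ci"

lemma Qg_weights:
  assumes "bi \<noteq> bj"
  shows "Qg ai aj bi bj ci cj x =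
     ((bj - x) / (bj - bi)) * (ci + (ai - m) * (bi - x)) + ((x - bi) / (bj - bi)) * (cj + (aj - m) * (bj - x))"
proof -
  have d: "bj - bi \<noteq> 0" using assms by simp
  have "Qg ai aj bi bj ci cj x = (((x - bi) * (x - bj) * (ai - aj) + (x - bi) * (cj - ci)) + ci * (bj - bi)) / (bj - bi)"
    unfolding Qg_def using d by (simp add: field_simps)
  also have "\<dots> = ((bj - x) * (ci + (ai - m) * (bi - x)) + (x - bi) * (cj + (aj - m) * (bj - x))) / (bj - bi)"
    by (rule arg_cong[where f="\<lambda>t. t / (bj - bi)"]) (simp add: algebra_simps)
  also have "\<dots> = ((bj - x) / (bj - bi)) * (ci + (ai - m) * (bi - x)) + ((x - bi) / (bj - bi)) * (cj + (aj - m) * (bj - x))"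
    by (simp add: add_divide_distrib)
  finally show ?thesis .
qed

lemma between_weights:
  fixes bi bj x :: real
  assumes "bi \<noteq> bj" "min bi bj \<le> x" "x \<le> max bi bj"
  shows "(bj - x) / (bj - bi) \<ge> 0" "(x - bi) / (bj - bi) \<ge> 0"
    "(bj - x) / (bj - bi) + (x - bi) / (bj - bi) = 1"
proof -
  show "(bj - x) / (bj - bi) \<ge> 0"
  proof (cases "bi < bj")
    case True
    have "bj - x \<ge> 0" "bj - bi > 0" using True assms by (auto simp: min_def max_def split: if_splits)
    then show ?thesis by (rule divide_nonneg_pos)
  next
    case False
    have "bj - x \<le> 0" "bj - bi < 0" using False assms by (auto simp: min_def max_def split: if_splits)
    then show ?thesis by (rule divide_nonpos_neg)
  qed
  show "(x - bi) / (bj - bi) \<ge> 0"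
  proof (cases "bi < bj")
    case True
    have "x - bi \<ge> 0" "bj - bi > 0" using True assms by (auto simp: min_def max_def split: if_splits)
    then show ?thesis by (rule divide_nonneg_pos)
  next
    case False
    have "x - bi \<le> 0" "bj - bi < 0" using False assms by (auto simp: min_def max_def split: if_splits)
    then show ?thesis by (rule divide_nonpos_neg)
  qed
  show "(bj - x) / (bj - bi) + (x - bi) / (bj - bi) = 1" using assms
    by (simp add: divide_simps)
qed

lemma Qg_le_max_lines:
  assumes "bi \<noteq> bj" "min bi bj \<le> x" "x \<le> max bi bj"
  shows "Qg ai aj bi bj ci cj x \<le> max (ci + (ai - m) * (bi - x)) (cj + (aj - m) * (bj - x))"
proof -
  define wi where "wi = (bj - x) / (bj - bi)"
  define wj where "wj = (x - bi) / (bj - bi)"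
  define M where "M = max (ci + (ai - m) * (bi - x)) (cj + (aj - m) * (bj - x))"
  have w: "wi \<ge> 0" "wj \<ge> 0" "wi + wj = 1" using between_weights[OF assms] by (auto simp: wi_def wj_def)
  have "Qg ai aj bi bj ci cj x = wi * (ci + (ai - m) * (bi - x)) + wj * (cj + (aj - m) * (bj - x))"
    using Qg_weights[OF assms(1)] by (simp add: wi_def wj_def)
  also have "\<dots> \<le> wi * M + wj * M"
    by (intro add_mono mult_left_mono) (auto simp: M_def w)
  also have "\<dots> = M" using w by (simp add: distrib_right[symmetric])
  finally show ?thesis by (simp add: M_def)
qed

lemma Qg_interp:
  assumes "bi \<noteq> bj" "min bi bj \<le> x" "x \<le> max bi bj" "ai = aj"
  shows "Qg ai aj bi bj ci cj x \<le> max ci cj"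
proof -
  have "Qg ai aj bi bj ci cj x \<le> max (ci + (ai - ai) * (bi - x)) (cj + (aj - ai) * (bj - x))"
    by (rule Qg_le_max_lines[OF assms(1-3)])
  then show ?thesis using assms(4) by simp
qed

lemma Qg_convex_case:
  assumes "bi \<noteq> bj" "min bi bj \<le> x" "x \<le> max bi bj" "(ai - aj) / (bj - bi) \<ge> 0"
  shows "Qg ai aj bi bj ci cj x \<le> max ci cj"
proof -
  define t where "t = (x - bi) / (bj - bi)"
  have w: "(bj - x) / (bj - bi) \<ge> 0" "(x - bi) / (bj - bi) \<ge> 0"
    "(bj - x) / (bj - bi) + (x - bi) / (bj - bi) = 1" using between_weights[OF assms(1-3)] by auto
  have t: "t \<ge> 0" "1 - t \<ge> 0" "t \<le> 1" using w unfolding t_def by linarith+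
  have p: "(x - bi) * (x - bj) \<le> 0" using assms(2,3)
    by (cases "bi \<le> x") (auto simp: mult_nonneg_nonpos mult_nonpos_nonneg min_def max_def split: if_splits)
  have eq: "Qg ai aj bi bj ci cj x = ((ai - aj) / (bj - bi)) * ((x - bi) * (x - bj)) + ((1 - t) * ci + t * cj)"
  proof -
    have "Qg ai aj bi bj ci cj x = (1 / (bj - bi)) * ((x - bi) * (x - bj) * (ai - aj)) + ((x - bi) / (bj - bi)) * (cj - ci) + ci"
      unfolding Qg_def by (simp add: distrib_left)
    also have "\<dots> = ((ai - aj) / (bj - bi)) * ((x - bi) * (x - bj)) + (t * (cj - ci) + ci)"
      unfolding t_def by simp
    also have "\<dots> = ((ai - aj) / (bj - bi)) * ((x - bi) * (x - bj)) + ((1 - t) * ci + t * cj)"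
      by (simp add: algebra_simps)
    finally show ?thesis .
  qed
  have "((ai - aj) / (bj - bi)) * ((x - bi) * (x - bj)) \<le> 0"
    using assms(4) p by (rule mult_nonneg_nonpos)
  moreover have "(1 - t) * ci + t * cj \<le> (1 - t) * max ci cj + t * max ci cj"
    by (intro add_mono mult_left_mono) (auto simp: t)
  ultimately show ?thesis unfolding eq by (simp add: algebra_simps)
qed

lemma sqdiff: "(x - v)^2 - (y - v)^2 = (x - y) * (x + y - 2 * (v::real))"
  by (simp add: power2_eq_square algebra_simps)

lemma Qg_vertex:
  assumes "bi \<noteq> bj" "ai \<noteq> aj"
  shows "Qg ai aj bi bj ci cj x - Qg ai aj bi bj ci cj y = ((ai - aj) / (bj - bi)) * ((x - ((cj - ci) / (2 * (aj - ai)) + (bi + bj) / 2))^2 - (y - ((cj - ci) / (2 * (aj - ai)) + (bi + bj) / 2))^2)"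
proof -
  have d1: "bj - bi \<noteq> 0" "aj - ai \<noteq> 0" "ai - aj \<noteq> 0" using assms by auto
  define A where "A = ai - aj"
  define B where "B = bj - bi"
  have A: "A \<noteq> 0" and B: "B \<noteq> 0" using assms by (auto simp: A_def B_def)
  have e1: "Qg ai aj bi bj ci cj x - Qg ai aj bi bj ci cj y
      = (A * ((x - y) * (x + y - bi - bj)) + (x - y) * (cj - ci)) / B"
  proof -
    have "Qg ai aj bi bj ci cj x - Qg ai aj bi bj ci cj y
       = (((x - bi) * (x - bj) * (ai - aj) + (x - bi) * (cj - ci)) - ((y - bi) * (y - bj) * (ai - aj) + (y - bi) * (cj - ci))) / B"
      unfolding Qg_def B_def by (simp add: diff_divide_distrib)
    also have "\<dots> = (A * ((x - y) * (x + y - bi - bj)) + (x - y) * (cj - ci)) / B"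
      by (rule arg_cong[where f="\<lambda>t. t / B"]) (simp add: A_def algebra_simps)
    finally show ?thesis .
  qed
  have v2: "2 * ((cj - ci) / (2 * (aj - ai)) + (bi + bj) / 2) = bi + bj - (cj - ci) / A"
    using A by (simp add: A_def field_simps)
  have e2: "(x - ((cj - ci) / (2 * (aj - ai)) + (bi + bj) / 2))^2 - (y - ((cj - ci) / (2 * (aj - ai)) + (bi + bj) / 2))^2
      = (x - y) * (x + y - 2 * ((cj - ci) / (2 * (aj - ai)) + (bi + bj) / 2))"
    by (rule sqdiff)
  also have "\<dots> = (x - y) * (x + y - bi - bj) + (x - y) * (cj - ci) / A"
    unfolding v2 by (simp add: algebra_simps)
  finally have e2': "(x - ((cj - ci) / (2 * (aj - ai)) + (bi + bj) / 2))^2 - (y - ((cj - ci) / (2 * (aj - ai)) + (bi + bj) / 2))^2 = (x - y) * (x + y - bi - bj) + (x - y) * (cj - ci) / A" .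
  have "(A / B) * ((x - y) * (x + y - bi - bj) + (x - y) * (cj - ci) / A) = (A * ((x - y) * (x + y - bi - bj)) + (x - y) * (cj - ci)) / B"
    using A B by (simp add: field_simps)
  then show ?thesis unfolding e1 e2' by (simp only: A_def B_def)
qed

lemma Qg_concave_case:
  assumes "bi \<noteq> bj" "ai \<noteq> aj" "min bi bj \<le> x" "x \<le> max bi bj" "(ai - aj) / (bj - bi) < 0"
  shows "Qg ai aj bi bj ci cj x \<le> Qg ai aj bi bj ci cj (mu_tilde ai aj bi bj ci cj)"
proof -
  define v where "v = (cj - ci) / (2 * (aj - ai)) + (bi + bj) / 2"
  define y where "y = mu_tilde ai aj bi bj ci cj"
  have y: "y = min (max v (min bi bj)) (max bi bj)"
    using assms(1,2) by (simp add: y_def mu_tilde_def v_def)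
  have "\<bar>y - v\<bar> \<le> \<bar>x - v\<bar>" using assms(3,4) unfolding y by (auto simp: min_def max_def split: if_splits)
  hence sq: "(y - v)^2 \<le> (x - v)^2" by (simp add: abs_le_square_iff)
  have "Qg ai aj bi bj ci cj x - Qg ai aj bi bj ci cj y = ((ai - aj) / (bj - bi)) * ((x - v)^2 - (y - v)^2)"
    using Qg_vertex[OF assms(1,2)] by (simp add: v_def)
  also have "\<dots> \<le> 0" using assms(5) sq by (intro mult_nonpos_nonneg) auto
  finally show ?thesis by (simp add: y_def)
qed


lemma Qg_mult_pre:
  assumes "bi \<noteq> bj"
  shows "Qg ai aj bi bj ci cj x = Qg aj ai bj bi cj ci x"
proof -
  have B: "bj - bi \<noteq> 0" "bi - bj \<noteq> 0" using assms by auto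
  have e: "bi - bj = - (bj - bi)" by simp
  have "Qg aj ai bj bi cj ci x = - ((x - bj) * (x - bi) * (aj - ai) + (x - bj) * (ci - cj)) / (bj - bi) + cj"
    unfolding Qg_def e by (simp add: divide_simps) (simp add: algebra_simps)
  also have "\<dots> = ((x - bi) * (x - bj) * (ai - aj) + (x - bi) * (cj - ci)) / (bj - bi) + ci"
  proof -
    have "- ((x - bj) * (x - bi) * (aj - ai) + (x - bj) * (ci - cj)) + cj * (bj - bi)
        = ((x - bi) * (x - bj) * (ai - aj) + (x - bi) * (cj - ci)) + ci * (bj - bi)"
      by (simp add: algebra_simps)
    then show ?thesis using B by (simp add: divide_simps)
  qed
  also have "\<dots> = Qg ai aj bi bj ci cj x" by (simp add: Qg_def)
  finally show ?thesis by simp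
qed

lemma Qg_sym: "bi \<noteq> bj \<Longrightarrow> Qg ai aj bi bj ci cj x = Qg aj ai bj bi cj ci x"
  using Qg_mult_pre by blast

lemma mu_tilde_sym: "ai \<noteq> aj \<Longrightarrow> bi \<noteq> bj \<Longrightarrow> mu_tilde ai aj bi bj ci cj = mu_tilde aj ai bj bi cj ci"
proof -
  assume h: "ai \<noteq> aj" "bi \<noteq> bj"
  have "(cj - ci) / (2 * (aj - ai)) + (bi + bj) / 2 = (ci - cj) / (2 * (ai - aj)) + (bj + bi) / 2"
    using h by (simp add: field_simps)
  then show ?thesis using h unfolding mu_tilde_def by (simp add: min.commute max.commute)
qed

lemma q_fun_Qg: "ai \<noteq> aj \<Longrightarrow> bi \<noteq> bj \<Longrightarrow> q_fun ai aj bi bj ci cj x = Qg ai aj bi bj ci cj x"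
  by (simp add: q_fun_def Qg_def)

lemma q_fun_sym:
  assumes "ai \<noteq> aj" "bi \<noteq> bj"
  shows "q_fun ai aj bi bj ci cj (mu_tilde ai aj bi bj ci cj) = q_fun aj ai bj bi cj ci (mu_tilde aj ai bj bi cj ci)"
  using q_fun_Qg Qg_sym mu_tilde_sym assms by (metis)


lemma Qg_le_R:
  assumes "bi \<noteq> bj" "min bi bj \<le> x" "x \<le> max bi bj" "ci \<le> R" "cj \<le> R"
    "ai \<noteq> aj \<Longrightarrow> q_fun ai aj bi bj ci cj (mu_tilde ai aj bi bj ci cj) \<le> R"
  shows "Qg ai aj bi bj ci cj x \<le> R"
proof (cases "ai = aj")
  case True
  then show ?thesis using Qg_interp[OF assms(1-3) True, of ci cj] assms(4,5) by simp
next
  case False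
  show ?thesis
  proof (cases "(ai - aj) / (bj - bi) \<ge> 0")
    case True
    then show ?thesis using Qg_convex_case[OF assms(1-3) True, of ci cj] assms(4,5) by simp
  next
    case F2: False
    have "Qg ai aj bi bj ci cj x \<le> Qg ai aj bi bj ci cj (mu_tilde ai aj bi bj ci cj)"
      using Qg_concave_case[OF assms(1) False assms(2,3)] F2 by simp
    also have "\<dots> = q_fun ai aj bi bj ci cj (mu_tilde ai aj bi bj ci cj)"
      using q_fun_Qg[OF False assms(1)] by simp
    finally show ?thesis using assms(6)[OF False] by simp
  qed
qed

lemma Qg_mult:
  assumes "bi \<noteq> bj"
  shows "Qg ai aj bi bj ci cj x * (bi - bj) = ci * (x - bj) + cj * (bi - x) + (ai - aj) * (bi - x) * (x - bj)"
proof -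
  define N where "N = (x - bi) * (x - bj) * (ai - aj) + (x - bi) * (cj - ci)"
  define B where "B = bj - bi"
  have B: "B \<noteq> 0" using assms by (simp add: B_def)
  have "Qg ai aj bi bj ci cj x = N / B + ci" by (simp add: Qg_def N_def B_def)
  hence "Qg ai aj bi bj ci cj x * (bi - bj) = (N / B + ci) * (- B)" by (simp add: B_def)
  also have "\<dots> = - N - ci * B" using B by (simp add: algebra_simps)
  also have "\<dots> = ci * (x - bj) + cj * (bi - x) + (ai - aj) * (bi - x) * (x - bj)"
    by (simp add: N_def B_def algebra_simps)
  finally show ?thesis .
qed

lemma exists_mu1:
  fixes a b c :: "nat \<Rightarrow> real"
  assumes fin: "finite I" and ne: "I \<noteq> {}"
    and abd: "\<And>k. k \<in> I \<Longrightarrow> al \<le> a k \<and> a k \<le> au"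
    and cR: "\<And>k. k \<in> I \<Longrightarrow> c k \<le> R"
    and pr: "\<And>i j. i \<in> I \<Longrightarrow> j \<in> I \<Longrightarrow> b j < x \<Longrightarrow> x < b i \<Longrightarrow>
       (a i - a j) * (b i - x) * (x - b j) \<le> (R - c i) * (x - b j) + (R - c j) * (b i - x)"
  shows "\<exists>m\<in>{al..au}. \<forall>k\<in>I. c k + (a k - m) * (b k - x) \<le> R"
proof -
  define lo where "lo k = (if b k > x then a k - (R - c k) / (b k - x) else al)" for k
  define hi where "hi k = (if b k < x then a k + (R - c k) / (x - b k) else au)" for k
  have alau: "al \<le> au" using ne abd by fastforce
  have h1: "lo k \<le> au" if "k \<in> I" for k
  proof -
    have "(R - c k) / (b k - x) \<ge> 0" if "b k > x" using cR[OF \<open>k \<in> I\<close>] that by simp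
    then show ?thesis using abd[OF that] alau unfolding lo_def by auto
  qed
  have h2: "al \<le> hi k" if "k \<in> I" for k
  proof -
    have "(R - c k) / (x - b k) \<ge> 0" if "b k < x" using cR[OF \<open>k \<in> I\<close>] that by simp
    then show ?thesis using abd[OF that] alau unfolding hi_def by auto
  qed
  have h3: "lo i \<le> hi j" if "i \<in> I" "j \<in> I" for i j
  proof (cases "b i > x \<and> b j < x")
    case True
    define p where "p = b i - x"
    define q where "q = x - b j"
    have p: "p > 0" and q: "q > 0" using True by (auto simp: p_def q_def)
    have "(a i - a j) * (p * q) \<le> (R - c i) * q + (R - c j) * p"
      using pr[OF that] True by (simp add: p_def q_def mult.assoc)
    hence "a i - a j \<le> ((R - c i) * q + (R - c j) * p) / (p * q)"
      using p q by (simp add: pos_le_divide_eq)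
    also have "\<dots> = (R - c i) / p + (R - c j) / q" using p q by (simp add: field_simps)
    finally have "a i - (R - c i) / p \<le> a j + (R - c j) / q" by simp
    then show ?thesis using True unfolding lo_def hi_def p_def q_def by simp
  next
    case False
    then show ?thesis
    proof (cases "b i > x")
      case True
      then have "b j \<ge> x" using False by simp
      then show ?thesis using h1[OF that(1)] unfolding hi_def by simp
    next
      case F2: False
      then show ?thesis using h2[OF that(2)] alau unfolding lo_def by simp
    qed
  qed
  define m where "m = Max (insert al (lo ` I))"
  have finS: "finite (insert al (lo ` I))" using fin by simp
  have m1: "al \<le> m" unfolding m_def using finS by simp
  have m2: "lo k \<le> m" if "k \<in> I" for k unfolding m_def using finS that by simp
  have m3: "m \<le> au" unfolding m_def using finS alau h1 by simp
  have m4: "m \<le> hi k" if "k \<in> I" for k unfolding m_def using finS h2[OF that] h3[OF _ that] by auto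
  have "c k + (a k - m) * (b k - x) \<le> R" if k: "k \<in> I" for k
  proof -
    consider "b k > x" | "b k < x" | "b k = x" by linarith
    then show ?thesis
    proof cases
      case 1
      then have "a k - (R - c k) / (b k - x) \<le> m" using m2[OF k] unfolding lo_def by simp
      hence "a k - m \<le> (R - c k) / (b k - x)" by simp
      hence "(a k - m) * (b k - x) \<le> R - c k" using 1 by (simp add: pos_le_divide_eq)
      then show ?thesis by simp
    next
      case 2
      then have "m \<le> a k + (R - c k) / (x - b k)" using m4[OF k] unfolding hi_def by simp
      hence "m - a k \<le> (R - c k) / (x - b k)" by simp
      hence "(m - a k) * (x - b k) \<le> R - c k" using 2 by (simp add: pos_le_divide_eq)
      moreover have "(a k - m) * (b k - x) = (m - a k) * (x - b k)" by (simp add: algebra_simps)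
      ultimately show ?thesis by simp
    next
      case 3
      then show ?thesis using cR[OF k] by simp
    qed
  qed
  then show ?thesis using m1 m3 by (intro bexI[where x=m]) auto
qed



lemma main_real:
  fixes a b c :: "nat \<Rightarrow> real" and K :: nat
  assumes K: "K \<ge> 1"
    and abd: "\<And>k. k \<in> {1..K} \<Longrightarrow> al \<le> a k \<and> a k \<le> au"
    and bbd: "\<And>k. k \<in> {1..K} \<Longrightarrow> bl \<le> b k \<and> b k \<le> bu"
  shows "(SUP \<mu>2 \<in> {bl..bu}. INF \<mu>1 \<in> {al..au}. Max ((\<lambda>k. c k + (a k - \<mu>1) * (b k - \<mu>2)) ` {1..K}))
     = max (Max (c ` {1..K}))
        (Max ((\<lambda>(i, j). q_fun (a i) (a j) (b i) (b j) (c i) (c j)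
                          (mu_tilde (a i) (a j) (b i) (b j) (c i) (c j)))
              ` {(i, j). 1 \<le> i \<and> i \<le> j \<and> j \<le> K}))"
  (is "?L = ?R")
proof -
  define I where "I = {1..K}"
  define PS where "PS = {(i, j). 1 \<le> i \<and> i \<le> j \<and> j \<le> K}"
  define pv where "pv = (\<lambda>(i::nat, j::nat). q_fun (a i) (a j) (b i) (b j) (c i) (c j)
                          (mu_tilde (a i) (a j) (b i) (b j) (c i) (c j)))"
  define F where "F m1 m2 = Max ((\<lambda>k. c k + (a k - m1) * (b k - m2)) ` I)" for m1 m2
  define R where "R = ?R"
  have abdI: "\<And>k. k \<in> I \<Longrightarrow> al \<le> a k \<and> a k \<le> au" using abd by (simp add: I_def)
  have bbdI: "\<And>k. k \<in> I \<Longrightarrow> bl \<le> b k \<and> b k \<le> bu" using bbd by (simp add: I_def)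
  have finI: "finite I" and neI: "I \<noteq> {}" and oneI: "1 \<in> I" using K by (auto simp: I_def)
  have finPS: "finite PS"
    by (rule finite_subset[of _ "{1..K} \<times> {1..K}"]) (auto simp: PS_def)
  have nePS: "(1, 1) \<in> PS" using K by (simp add: PS_def)
  have R_eq: "R = max (Max (c ` I)) (Max (pv ` PS))"
    by (simp add: R_def I_def PS_def pv_def)
  have cR: "c k \<le> R" if "k \<in> I" for k
    unfolding R_eq using finI that by (simp add: max.coboundedI1)
  have pvR: "pv (i, j) \<le> R" if "(i, j) \<in> PS" for i j
    unfolding R_eq using finPS that by (intro max.coboundedI2) simp
  have Fge: "c k + (a k - m1) * (b k - m2) \<le> F m1 m2" if "k \<in> I" for k m1 m2
    unfolding F_def using finI that by simp
  have albu: "al \<le> au" "bl \<le> bu" using abd[of 1] bbd[of 1] oneI by (auto simp: I_def)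
  have pr: "(a i - a j) * (b i - x) * (x - b j) \<le> (R - c i) * (x - b j) + (R - c j) * (b i - x)"
    if ij: "i \<in> I" "j \<in> I" and x: "b j < x" "x < b i" for i j x
  proof -
    have bne: "b i \<noteq> b j" using x by simp
    have qR: "q_fun (a i) (a j) (b i) (b j) (c i) (c j) (mu_tilde (a i) (a j) (b i) (b j) (c i) (c j)) \<le> R"
      if "a i \<noteq> a j"
    proof (cases "i \<le> j")
      case True
      then have "(i, j) \<in> PS" using ij by (auto simp: PS_def I_def)
      then show ?thesis using pvR by (simp add: pv_def)
    next
      case False
      then have "(j, i) \<in> PS" using ij by (auto simp: PS_def I_def)
      then have "pv (j, i) \<le> R" by (rule pvR)
      then show ?thesis using q_fun_sym[OF that bne] by (simp add: pv_def)
    qed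
    have Q: "Qg (a i) (a j) (b i) (b j) (c i) (c j) x \<le> R"
      by (rule Qg_le_R[OF bne _ _ cR[OF ij(1)] cR[OF ij(2)] qR]) (use x in auto)
    have "Qg (a i) (a j) (b i) (b j) (c i) (c j) x * (b i - b j) \<le> R * (b i - b j)"
      using Q x by (intro mult_right_mono) auto
    moreover have "Qg (a i) (a j) (b i) (b j) (c i) (c j) x * (b i - b j) = c i * (x - b j) + c j * (b i - x) + (a i - a j) * (b i - x) * (x - b j)"
      by (rule Qg_mult[OF bne])
    moreover have "R * (b i - b j) = (R - c i) * (x - b j) + (R - c j) * (b i - x) + c i * (x - b j) + c j * (b i - x)"
      by (simp add: algebra_simps)
    ultimately show ?thesis by linarith
  qed
  have Flow: "c 1 - (au - al) * (bu - bl) \<le> F m1 m2" if "m1 \<in> {al..au}" "m2 \<in> {bl..bu}" for m1 m2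
  proof -
    have "\<bar>a 1 - m1\<bar> \<le> au - al" "\<bar>b 1 - m2\<bar> \<le> bu - bl" using that abd[of 1] bbd[of 1] oneI
      by (auto simp: I_def)
    hence "\<bar>(a 1 - m1) * (b 1 - m2)\<bar> \<le> (au - al) * (bu - bl)"
      unfolding abs_mult by (intro mult_mono) auto
    hence "c 1 - (au - al) * (bu - bl) \<le> c 1 + (a 1 - m1) * (b 1 - m2)" by linarith
    also have "\<dots> \<le> F m1 m2" by (rule Fge[OF oneI])
    finally show ?thesis .
  qed
  have bddb: "bdd_below ((\<lambda>m1. F m1 m2) ` {al..au})" if "m2 \<in> {bl..bu}" for m2
    using Flow[OF _ that] by (intro bdd_belowI2) auto
  have A: "(INF m1 \<in> {al..au}. F m1 m2) \<le> R" if m2: "m2 \<in> {bl..bu}" for m2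
  proof -
    obtain m where m: "m \<in> {al..au}" and hm: "\<forall>k\<in>I. c k + (a k - m) * (b k - m2) \<le> R"
      using exists_mu1[where I=I and a=a and b=b and c=c and x=m2 and R=R and al=al and au=au, OF finI neI abdI cR pr] by blast
    have "F m m2 \<le> R" unfolding F_def using finI neI hm by simp
    moreover have "(INF m1 \<in> {al..au}. F m1 m2) \<le> F m m2"
      by (rule cINF_lower[OF bddb[OF m2] m])
    ultimately show ?thesis by linarith
  qed
  have LR: "?L \<le> R"
  proof -
    have "?L = (SUP m2 \<in> {bl..bu}. INF m1 \<in> {al..au}. F m1 m2)" by (simp add: F_def I_def)
    also have "\<dots> \<le> R" using albu A by (intro cSUP_least) auto
    finally show ?thesis .
  qed
  have B: "\<exists>m2\<in>{bl..bu}. \<forall>m1. R \<le> F m1 m2"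
  proof -
    have "Max (c ` I) \<in> c ` I" using finI neI by simp
    moreover have "Max (pv ` PS) \<in> pv ` PS" using finPS nePS by (intro Max_in) auto
    ultimately have "(\<exists>k\<in>I. R = c k) \<or> (\<exists>p\<in>PS. R = pv p)"
      unfolding R_eq by (auto simp: max_def)
    then show ?thesis
    proof
      assume "\<exists>k\<in>I. R = c k"
      then obtain k where k: "k \<in> I" "R = c k" by blast
      show ?thesis
        using Fge[OF k(1), of _ "b k"] k bbd[of k] by (intro bexI[where x="b k"]) (auto simp: I_def)
    next
      assume "\<exists>p\<in>PS. R = pv p"
      then obtain i j where ij: "(i, j) \<in> PS" "R = pv (i, j)" by auto
      have iI: "i \<in> I" and jI: "j \<in> I" using ij by (auto simp: PS_def I_def)
      show ?thesis
      proof (cases "a i \<noteq> a j \<and> b i \<noteq> b j")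
        case False
        then have "R = c i" using ij by (auto simp: pv_def q_fun_def)
        then show ?thesis
          using Fge[OF iI, of _ "b i"] bbd[of i] iI by (intro bexI[where x="b i"]) (auto simp: I_def)
      next
        case True
        define y where "y = mu_tilde (a i) (a j) (b i) (b j) (c i) (c j)"
        have yb: "min (b i) (b j) \<le> y" "y \<le> max (b i) (b j)"
          using True unfolding y_def mu_tilde_def by auto
        have yin: "y \<in> {bl..bu}" using yb bbdI[OF iI] bbdI[OF jI] by (auto simp: I_def min_def max_def split: if_splits)
        have Ry: "R = Qg (a i) (a j) (b i) (b j) (c i) (c j) y"
          using ij True by (simp add: pv_def y_def q_fun_Qg)
        have "R \<le> F m1 y" for m1
        proof -
          have "R \<le> max (c i + (a i - m1) * (b i - y)) (c j + (a j - m1) * (b j - y))"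
            unfolding Ry using True yb by (intro Qg_le_max_lines) auto
          also have "\<dots> \<le> F m1 y" using Fge[OF iI] Fge[OF jI] by simp
          finally show ?thesis .
        qed
        then show ?thesis using yin by blast
      qed
    qed
  qed
  have RL: "R \<le> ?L"
  proof -
    obtain m2 where m2: "m2 \<in> {bl..bu}" and hm2: "\<forall>m1. R \<le> F m1 m2" using B by blast
    have "R \<le> (INF m1 \<in> {al..au}. F m1 m2)" using albu hm2 by (intro cINF_greatest) auto
    also have "\<dots> \<le> (SUP m2 \<in> {bl..bu}. INF m1 \<in> {al..au}. F m1 m2)"
    proof (rule cSUP_upper2[OF _ m2])
      show "bdd_above ((\<lambda>m2. INF m1 \<in> {al..au}. F m1 m2) ` {bl..bu})"
        using A by (intro bdd_aboveI2[where M=R]) auto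
    qed simp
    also have "\<dots> = ?L" by (simp add: F_def I_def)
    finally show ?thesis .
  qed
  show ?thesis using antisym[OF LR RL] by (simp only: R_def)
qed



lemma lin_cov:
  fixes X Y :: "'a \<Rightarrow> real"
  assumes Q: "prob_space Q" and Xm: "X \<in> borel_measurable Q" and Ym: "Y \<in> borel_measurable Q"
    and X2: "integrable Q (\<lambda>\<omega>. (X \<omega>)\<^sup>2)" and Y2: "integrable Q (\<lambda>\<omega>. (Y \<omega>)\<^sup>2)"
  shows "(LINT \<omega>|Q. (X \<omega> - m1) * (Y \<omega> - m2))
     = cov_P Q X Y + ((LINT \<omega>|Q. X \<omega>) - m1) * ((LINT \<omega>|Q. Y \<omega>) - m2)"
proof -
  interpret prob_space Q by (rule Q)
  have iX: "integrable Q X" using square_integrable_imp_integrable[OF Xm] X2 by simp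
  have iY: "integrable Q Y" using square_integrable_imp_integrable[OF Ym] Y2 by simp
  have iXY: "integrable Q (\<lambda>\<omega>. X \<omega> * Y \<omega>)"
  proof (rule Bochner_Integration.integrable_bound[OF Bochner_Integration.integrable_add[OF X2 Y2]])
    show "(\<lambda>\<omega>. X \<omega> * Y \<omega>) \<in> borel_measurable Q" using Xm Ym by measurable
    show "AE x in Q. norm (X x * Y x) \<le> norm ((X x)\<^sup>2 + (Y x)\<^sup>2)"
    proof (rule AE_I2)
      fix x
      have h1: "2 * \<bar>X x\<bar> * \<bar>Y x\<bar> \<le> (X x)\<^sup>2 + (Y x)\<^sup>2"
        using sum_squares_bound[of "\<bar>X x\<bar>" "\<bar>Y x\<bar>"] by (simp add: power2_abs)
      have h0: "\<bar>X x\<bar> * \<bar>Y x\<bar> \<ge> 0" by simp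
      have "\<bar>X x * Y x\<bar> \<le> (X x)\<^sup>2 + (Y x)\<^sup>2" using h1 h0 unfolding abs_mult by linarith
      then show "norm (X x * Y x) \<le> norm ((X x)\<^sup>2 + (Y x)\<^sup>2)" by simp
    qed
  qed
  have gen: "(LINT \<omega>|Q. (X \<omega> - m1) * (Y \<omega> - m2))
     = (LINT \<omega>|Q. X \<omega> * Y \<omega>) - m2 * (LINT \<omega>|Q. X \<omega>) - m1 * (LINT \<omega>|Q. Y \<omega>) + m1 * m2" for m1 m2
  proof -
    have "(LINT \<omega>|Q. (X \<omega> - m1) * (Y \<omega> - m2))
        = (LINT \<omega>|Q. X \<omega> * Y \<omega> - m2 * X \<omega> - m1 * Y \<omega> + m1 * m2)"
      by (rule Bochner_Integration.integral_cong) (auto simp: algebra_simps)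
    also have "\<dots> = (LINT \<omega>|Q. X \<omega> * Y \<omega>) - m2 * (LINT \<omega>|Q. X \<omega>) - m1 * (LINT \<omega>|Q. Y \<omega>) + m1 * m2"
      using iX iY iXY by (simp add: prob_space)
    finally show ?thesis .
  qed
  show ?thesis unfolding cov_P_def gen by (simp add: algebra_simps)
qed



theorem theorem4p4:
  fixes M :: "'a measure" and P :: "nat \<Rightarrow> 'a measure" and K :: nat
    and X Y :: "'a \<Rightarrow> real"
  assumes K: "K \<ge> 1"
    and prob: "\<And>i. i \<in> {1..K} \<Longrightarrow> prob_space (P i)"
    and sets: "\<And>i. i \<in> {1..K} \<Longrightarrow> sets (P i) = sets M"
    and X: "X \<in> borel_measurable M" and Y: "Y \<in> borel_measurable M"
    and X2: "\<And>i. i \<in> {1..K} \<Longrightarrow> integrable (P i) (\<lambda>\<omega>. (X \<omega>)\<^sup>2)"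
    and Y2: "\<And>i. i \<in> {1..K} \<Longrightarrow> integrable (P i) (\<lambda>\<omega>. (Y \<omega>)\<^sup>2)"
  defines "a \<equiv> (\<lambda>i. LINT \<omega>|P i. X \<omega>)"
    and "b \<equiv> (\<lambda>i. LINT \<omega>|P i. Y \<omega>)"
    and "c \<equiv> (\<lambda>i. cov_P (P i) X Y)"
  shows "upper_cov P K X Y =
    max (Max ((\<lambda>i. cov_P (P i) X Y) ` {1..K}))
        (Max ((\<lambda>(i, j). q_fun (a i) (a j) (b i) (b j) (c i) (c j)
                          (mu_tilde (a i) (a j) (b i) (b j) (c i) (c j)))
              ` {(i, j). 1 \<le> i \<and> i \<le> j \<and> j \<le> K}))"
proof -
  have finI: "finite {1..K}" and neI: "{1..K} \<noteq> {}" using K by auto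
  have Xm: "X \<in> borel_measurable (P i)" and Ym: "Y \<in> borel_measurable (P i)" if "i \<in> {1..K}" for i
    using X Y measurable_cong_sets[OF sets[OF that] refl, of borel] by auto
  have lin: "(LINT \<omega>|P i. (X \<omega> - m1) * (Y \<omega> - m2)) = c i + (a i - m1) * (b i - m2)"
    if "i \<in> {1..K}" for i m1 m2
    using lin_cov[OF prob[OF that] Xm[OF that] Ym[OF that] X2[OF that] Y2[OF that]]
    by (simp add: a_def b_def c_def)
  have subE: "sub_E P K (\<lambda>\<omega>. (X \<omega> - m1) * (Y \<omega> - m2)) = Max ((\<lambda>k. c k + (a k - m1) * (b k - m2)) ` {1..K})"
    for m1 m2
    unfolding sub_E_def using lin by (intro arg_cong[where f=Max] image_cong) auto
  define au where "au = Max (a ` {1..K})"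
  define al where "al = - Max ((\<lambda>i. - a i) ` {1..K})"
  define bu where "bu = Max (b ` {1..K})"
  define bl where "bl = - Max ((\<lambda>i. - b i) ` {1..K})"
  have um: "upper_mean P K X = au" "upper_mean P K Y = bu"
    by (simp_all add: upper_mean_def sub_E_def au_def bu_def a_def b_def)
  have lm: "lower_mean P K X = al" "lower_mean P K Y = bl"
    by (simp_all add: lower_mean_def sub_E_def al_def bl_def a_def b_def)
  have abd: "al \<le> a k \<and> a k \<le> au" if "k \<in> {1..K}" for k
  proof -
    have "- a k \<le> Max ((\<lambda>i. - a i) ` {1..K})" by (rule Max_ge) (use finI that in auto)
    moreover have "a k \<le> Max (a ` {1..K})" by (rule Max_ge) (use finI that in auto)
    ultimately show ?thesis unfolding al_def au_def by linarith
  qed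
  have bbd: "bl \<le> b k \<and> b k \<le> bu" if "k \<in> {1..K}" for k
  proof -
    have "- b k \<le> Max ((\<lambda>i. - b i) ` {1..K})" by (rule Max_ge) (use finI that in auto)
    moreover have "b k \<le> Max (b ` {1..K})" by (rule Max_ge) (use finI that in auto)
    ultimately show ?thesis unfolding bl_def bu_def by linarith
  qed
  have "upper_cov P K X Y = (SUP \<mu>2 \<in> {bl..bu}. INF \<mu>1 \<in> {al..au}. Max ((\<lambda>k. c k + (a k - \<mu>1) * (b k - \<mu>2)) ` {1..K}))"
    unfolding upper_cov_def um lm subE ..
  also have "\<dots> = max (Max (c ` {1..K}))
        (Max ((\<lambda>(i, j). q_fun (a i) (a j) (b i) (b j) (c i) (c j)
                          (mu_tilde (a i) (a j) (b i) (b j) (c i) (c j)))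
              ` {(i, j). 1 \<le> i \<and> i \<le> j \<and> j \<le> K}))"
    by (rule main_real[OF K abd bbd])
  finally show ?thesis by (simp add: c_def)
qed


end
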